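(* Let $g\colon X\to\mathcal Q^{\vartriangle}$ be closed and convex. Then $g^{**}=g$, where for $x\in X$ $$g^{**}(x)=\bigcap_{\xi\in X^{\vartriangle},\,r\in\mathbb R,\,z^*\in C^-}\big(S_{(\xi,r,z^* )}(x)-^{\vartriangle}g^*(\xi,r,z^* )\big)$$ and $g^*\colon X^{\vartriangle}\times\mathbb R\times C^-\to\mathcal Q^{\vartriangle}$ is $g^*(\xi,r,z^* )=\bigcap_{x\in X}\big(S_{(\xi,r,z^* )}(x)-^{\vartriangle}g(x)\big)$.
   Context: $X,Z$ are separated locally convex spaces with duals $X^*,Z^*$; $C\subseteq Z$ convex cone with $0\in C$, $C^-=\{z^*\in Z^*: z^*(z)\leq0\ \forall z\in C\}$, assumed $\neq\{0\}$. $\mathcal Q^{\vartriangle}=\{A\subseteq Z: A=\operatorname{cl}\operatorname{co}(A+C)\}$ (contains $\emptyset$). $g$ is convex (closed) iff $\operatorname{gr}g=\{(x,z): z\in g(x)\}$ is convex (closed) in $X\times Z$. For $A,B\subseteq Z$: $A-^{\vartriangle}B=\{z\in Z: B+\{z\}\subseteq A\}$. For $x^*\in X^*$, $r\in\mathbb R$: $x^*_r(x)=x^*(x)-r$, $\hat x^*_r(x)=-\infty$ if $x^*(x)\leq r$, $+\infty$ otherwise; $\hat x^*=\hat x^*_0$; $X^{\vartriangle}=X^*\cup\{\hat x^*: x^*\in X^*\}$; $\xi_r=x^*_r$ if $\xi=x^*$, $\xi_r=\hat x^*_r$ if $\xi=\hat x^*$. Conaffine functions: $S_{(\xi,r,z^*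 )}(x)=\{z\in Z: \xi_r(x)\leq -z^*(z)\}$ for $\xi\in X^{\vartriangle}$, $r\in\mathbb R$, $z^*\in C^-$ (order of $\overline{\mathbb R}=\mathbb R\cup\{\pm\infty\}$). *)

theory Defs
  imports "HOL-Analysis.Analysis"
begin

class lc_tvs = real_vector + t2_space +
  assumes lc_continuous_add:
    "open U \<Longrightarrow> a + b \<in> U \<Longrightarrow>
      \<exists>V W. open V \<and> open W \<and> a \<in> V \<and> b \<in> W \<and> (\<forall>v\<in>V. \<forall>w\<in>W. v + w \<in> U)"
  assumes lc_continuous_scaleR:
    "open U \<Longrightarrow> c *\<^sub>R a \<in> U \<Longrightarrow>
      \<exists>e>0. \<exists>V. open V \<and> a \<in> V \<and> (\<forall>d. \<bar>d - c\<bar> < e \<longrightarrow> (\<forall>v\<in>V. d *\<^sub>R v \<in> U))"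
  assumes lc_locally_convex:
    "open U \<Longrightarrow> (0::'a) \<in> U \<Longrightarrow> \<exists>V. open V \<and> 0 \<in> V \<and> V \<subseteq> U \<and>
       (\<forall>x\<in>V. \<forall>y\<in>V. \<forall>u::real. 0 \<le> u \<and> u \<le> 1 \<longrightarrow> (1 - u) *\<^sub>R x + u *\<^sub>R y \<in> V)"

definition topdual :: "('a::lc_tvs \<Rightarrow> real) set" where
  "topdual = {f. linear f \<and> continuous_on UNIV f}"

definition negdual :: "'z::lc_tvs set \<Rightarrow> ('z \<Rightarrow> real) set" where
  "negdual C = {zs \<in> topdual. \<forall>z\<in>C. zs z \<le> 0}"

definition Qtri :: "'z::lc_tvs set \<Rightarrow> 'z set set" where
  "Qtri C = {A. A = closure (convex hull {a + c | a c. a \<in> A \<and> c \<in> C})}"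

definition graph :: "('x \<Rightarrow> 'z set) \<Rightarrow> ('x \<times> 'z) set" where
  "graph g = {(x, z). z \<in> g x}"

definition minus_tri :: "'z::real_vector set \<Rightarrow> 'z set \<Rightarrow> 'z set" where
  "minus_tri A B = {z. \<forall>b\<in>B. b + z \<in> A}"

text \<open>Elements of X^triangle: either x^* or hat x^*.\<close>
datatype 'x xtri = Lin "'x \<Rightarrow> real" | Hat "'x \<Rightarrow> real"

definition Xtri :: "('x::lc_tvs) xtri set" where
  "Xtri = {Lin f | f. f \<in> topdual} \<union> {Hat f | f. f \<in> topdual}"

fun xi_r :: "'x xtri \<Rightarrow> real \<Rightarrow> 'x \<Rightarrow> ereal" where
  "xi_r (Lin f) r x = ereal (f x - r)"
| "xi_r (Hat f) r x = (if f x \<le> r then -\<infinity> else \<infinity>)"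

definition Scon :: "'x xtri \<Rightarrow> real \<Rightarrow> ('z::real_vector \<Rightarrow> real) \<Rightarrow> 'x \<Rightarrow> 'z set" where
  "Scon xi r zs x = {z. xi_r xi r x \<le> ereal (- zs z)}"

definition conj :: "('x::lc_tvs \<Rightarrow> 'z::lc_tvs set) \<Rightarrow> 'x xtri \<Rightarrow> real \<Rightarrow> ('z \<Rightarrow> real) \<Rightarrow> 'z set" where
  "conj g xi r zs = (\<Inter>x. minus_tri (Scon xi r zs x) (g x))"

definition biconj :: "'z::lc_tvs set \<Rightarrow> ('x::lc_tvs \<Rightarrow> 'z set) \<Rightarrow> 'x \<Rightarrow> 'z set" where
  "biconj C g x = \<Inter>{minus_tri (Scon xi r zs x) (conj g xi r zs) | xi r zs.
                        xi \<in> Xtri \<and> zs \<in> negdual C}"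

end

theory Submission
  imports Defs
begin


lemma hahn_banach:
  fixes p :: "'a::real_vector \<Rightarrow> real"
  assumes sub: "\<And>x y. p (x+y) \<le> p x + p y"
    and hom: "\<And>c x. c > 0 \<Longrightarrow> p (c *\<^sub>R x) = c * p x"
    and nn: "\<And>x. 0 \<le> p x"
  shows "\<exists>F. linear F \<and> (\<forall>x. F x \<le> p x) \<and> F v = p v"
proof -
  define ok where "ok H \<longleftrightarrow>
     (\<forall>a b a' b'. (a,b)\<in>H \<longrightarrow> (a',b')\<in>H \<longrightarrow> (a+a', b+b') \<in> H) \<and>
     (\<forall>a b c. (a,b)\<in>H \<longrightarrow> (c *\<^sub>R a, c*b) \<in> H) \<and>
     (\<forall>a b b'. (a,b)\<in>H \<longrightarrow> (a,b')\<in>H \<longrightarrow> b = b') \<and>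
     (\<forall>a b. (a,b)\<in>H \<longrightarrow> b \<le> p a)" for H :: "('a \<times> real) set"
  have okadd: "\<And>H a b a' b'. ok H \<Longrightarrow> (a,b)\<in>H \<Longrightarrow> (a',b')\<in>H \<Longrightarrow> (a+a', b+b') \<in> H"
    and oksc: "\<And>H a b c. ok H \<Longrightarrow> (a,b)\<in>H \<Longrightarrow> (c *\<^sub>R a, c*b) \<in> H"
    and okfun: "\<And>H a b b'. ok H \<Longrightarrow> (a,b)\<in>H \<Longrightarrow> (a,b')\<in>H \<Longrightarrow> b = b'"
    and okdom: "\<And>H a b. ok H \<Longrightarrow> (a,b)\<in>H \<Longrightarrow> b \<le> p a"
    unfolding ok_def by blast+
  define H0 where "H0 = {(t *\<^sub>R v, t * p v) | t. True}"
  define A where "A = {H. ok H \<and> H0 \<subseteq> H}"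
  have p0: "p 0 = 0"
    using hom[of 2 0] by simp
  have okH0: "ok H0"
    unfolding ok_def H0_def
  proof (intro conjI allI impI)
    fix a b a' b' assume "(a,b) \<in> {(t *\<^sub>R v, t * p v) | t. True}" "(a',b') \<in> {(t *\<^sub>R v, t * p v) | t. True}"
    then obtain s t where "a = s *\<^sub>R v" "b = s * p v" "a' = t *\<^sub>R v" "b' = t * p v" by blast
    then show "(a+a', b+b') \<in> {(t *\<^sub>R v, t * p v) | t. True}"
      by (auto intro!: exI[where x="s+t"] simp: algebra_simps scaleR_add_left)
  next
    fix a b c assume "(a,b) \<in> {(t *\<^sub>R v, t * p v) | t. True}"
    then obtain s where "a = s *\<^sub>R v" "b = s * p v" by blast
    then show "(c *\<^sub>R a, c*b) \<in> {(t *\<^sub>R v, t * p v) | t. True}"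
      by (auto intro!: exI[where x="(c::real) * s"])
  next
    fix a b b' assume "(a,b) \<in> {(t *\<^sub>R v, t * p v) | t. True}" "(a,b') \<in> {(t *\<^sub>R v, t * p v) | t. True}"
    then obtain s t where "a = s *\<^sub>R v" "b = s * p v" "a = t *\<^sub>R v" "b' = t * p v" by blast
    then show "b = b'"
      by (cases "v = 0") (auto simp: p0)
  next
    fix a b assume "(a,b) \<in> {(t *\<^sub>R v, t * p v) | t. True}"
    then obtain t where ab: "a = t *\<^sub>R v" "b = t * p v" by blast
    show "b \<le> p a"
    proof (cases "t > 0")
      case True then show ?thesis using ab hom by simp
    next
      case False then have "t * p v \<le> 0" using nn[of v] by (simp add: mult_nonpos_nonneg)
      then show ?thesis using ab nn[of a] by simp
    qed
  qed
  have "\<exists>M\<in>A. \<forall>X\<in>A. M \<subseteq> X \<longrightarrow> X = M"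
  proof (rule Zorn_Lemma2, intro ballI)
    fix Ch assume Ch: "Ch \<in> chains A"
    show "\<exists>U\<in>A. \<forall>X\<in>Ch. X \<subseteq> U"
    proof (cases "Ch = {}")
      case True then show ?thesis using okH0 A_def by auto
    next
      case False
      have sub: "Ch \<subseteq> A" and ch: "\<And>X Y. X \<in> Ch \<Longrightarrow> Y \<in> Ch \<Longrightarrow> X \<subseteq> Y \<or> Y \<subseteq> X"
        using Ch unfolding chains_def chain_subset_def by auto
      have okX: "\<And>X. X \<in> Ch \<Longrightarrow> ok X" using sub A_def by auto
      have "ok (\<Union>Ch)"
        unfolding ok_def
      proof (intro conjI allI impI)
        fix a b a' b' assume "(a,b) \<in> \<Union>Ch" "(a',b') \<in> \<Union>Ch"
        then obtain X Y where XY: "X\<in>Ch" "Y\<in>Ch" "(a,b)\<in>X" "(a',b')\<in>Y" by auto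
        from ch[OF XY(1,2)] show "(a+a',b+b') \<in> \<Union>Ch"
        proof
          assume "X \<subseteq> Y" then show ?thesis using okadd[OF okX[OF XY(2)], of a b a' b'] XY by blast
        next
          assume "Y \<subseteq> X" then show ?thesis using okadd[OF okX[OF XY(1)], of a b a' b'] XY by blast
        qed
      next
        fix a b c assume "(a,b) \<in> \<Union>Ch"
        then obtain X where "X\<in>Ch" "(a,b)\<in>X" by auto
        then show "(c *\<^sub>R a, c*b) \<in> \<Union>Ch" using okX oksc by blast
      next
        fix a b b' assume "(a,b) \<in> \<Union>Ch" "(a,b') \<in> \<Union>Ch"
        then obtain X Y where XY: "X\<in>Ch" "Y\<in>Ch" "(a,b)\<in>X" "(a,b')\<in>Y" by auto
        from ch[OF XY(1,2)] show "b = b'"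
        proof
          assume "X \<subseteq> Y" then show ?thesis using okfun[OF okX[OF XY(2)], of a b b'] XY by blast
        next
          assume "Y \<subseteq> X" then show ?thesis using okfun[OF okX[OF XY(1)], of a b b'] XY by blast
        qed
      next
        fix a b assume "(a,b) \<in> \<Union>Ch"
        then obtain X where "X\<in>Ch" "(a,b)\<in>X" by auto
        then show "b \<le> p a" using okX okdom by blast
      qed
      moreover have "H0 \<subseteq> \<Union>Ch" using False sub A_def by auto
      ultimately show ?thesis unfolding A_def by auto
    qed
  qed
  then obtain M where MA: "M \<in> A" and Mmax: "\<And>X. X \<in> A \<Longrightarrow> M \<subseteq> X \<Longrightarrow> X = M" by blast
  have okM: "ok M" and H0M: "H0 \<subseteq> M" using MA A_def by auto
  have Madd: "\<And>a b a' b'. (a,b)\<in>M \<Longrightarrow> (a',b')\<in>M \<Longrightarrow> (a+a', b+b') \<in> M"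
    and Msc: "\<And>a b c. (a,b)\<in>M \<Longrightarrow> (c *\<^sub>R a, c*b) \<in> M"
    and Mfun: "\<And>a b b'. (a,b)\<in>M \<Longrightarrow> (a,b')\<in>M \<Longrightarrow> b = b'"
    and Mdom: "\<And>a b. (a,b)\<in>M \<Longrightarrow> b \<le> p a"
    using okM okadd oksc okfun okdom by blast+
  have vM: "(v, p v) \<in> M" using H0M unfolding H0_def by (auto intro!: exI[of _ 1])
  define h where "h a = (THE b. (a,b) \<in> M)" for a
  have hM: "\<And>a b. (a,b) \<in> M \<Longrightarrow> h a = b"
    unfolding h_def using Mfun by blast
  have total: "\<exists>b. (y,b) \<in> M" for y
  proof (rule ccontr)
    assume ny: "\<not> (\<exists>b. (y,b) \<in> M)"
    define L where "L = {h a - p (a - y) | a b. (a,b) \<in> M}"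
    have key: "h a - p (a - y) \<le> p (a' + y) - h a'" if "(a,b)\<in>M" "(a',b')\<in>M" for a b a' b'
    proof -
      have "(a+a', h a + h a') \<in> M" using Madd that hM by simp
      then have "h a + h a' \<le> p (a + a')" using Mdom by blast
      also have "p (a + a') \<le> p (a - y) + p (a' + y)"
        using sub[of "a - y" "a' + y"] by (simp add: algebra_simps)
      finally show ?thesis by simp
    qed
    define c where "c = Sup L"
    have Lne: "L \<noteq> {}" using vM L_def by auto
    have Lbdd: "bdd_above L"
    proof (rule bdd_aboveI)
      fix x assume "x \<in> L" then show "x \<le> p (v+y) - h v" using key vM L_def by blast
    qed
    have cU: "h a - p (a - y) \<le> c" if "(a,b)\<in>M" for a b
      unfolding c_def by (rule cSup_upper[OF _ Lbdd]) (use that L_def in auto)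
    have cL: "c \<le> p (a' + y) - h a'" if "(a',b')\<in>M" for a' b'
      unfolding c_def by (rule cSup_least[OF Lne]) (use that L_def key in auto)
    define M' where "M' = {(a + t *\<^sub>R y, b + t*c) | a b t. (a,b) \<in> M}"
    have "ok M'"
      unfolding ok_def
    proof (intro conjI allI impI)
      fix a b a' b' assume "(a,b) \<in> M'" "(a',b') \<in> M'"
      then obtain a1 b1 t a2 b2 s where "(a1,b1)\<in>M" "(a2,b2)\<in>M" "a = a1 + t *\<^sub>R y" "b = b1 + t*c"
         "a' = a2 + s *\<^sub>R y" "b' = b2 + s*c" unfolding M'_def by blast
      then have "(a+a',b+b') = ((a1+a2) + (t+s) *\<^sub>R y, (b1+b2) + (t+s)*c)"
        by (simp add: algebra_simps scaleR_add_left)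
      moreover have "(a1+a2, b1+b2) \<in> M" using Madd \<open>(a1,b1)\<in>M\<close> \<open>(a2,b2)\<in>M\<close> by blast
      ultimately show "(a+a',b+b') \<in> M'" unfolding M'_def by blast
    next
      fix a b d assume "(a,b) \<in> M'"
      then obtain a1 b1 t where "(a1,b1)\<in>M" "a = a1 + t *\<^sub>R y" "b = b1 + t*c" unfolding M'_def by blast
      then have "(d *\<^sub>R a, d*b) = (d *\<^sub>R a1 + (d*t) *\<^sub>R y, d*b1 + (d*t)*c)"
        by (simp add: algebra_simps)
      moreover have "(d *\<^sub>R a1, d*b1) \<in> M" using Msc \<open>(a1,b1)\<in>M\<close> by blast
      ultimately show "(d *\<^sub>R a, d*b) \<in> M'" unfolding M'_def by blast
    next
      fix a b b' assume "(a,b) \<in> M'" "(a,b') \<in> M'"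
      then obtain a1 b1 t a2 b2 s where m: "(a1,b1)\<in>M" "(a2,b2)\<in>M" "a = a1 + t *\<^sub>R y" "b = b1 + t*c"
         "a = a2 + s *\<^sub>R y" "b' = b2 + s*c" unfolding M'_def by blast
      have "t = s"
      proof (rule ccontr)
        assume ts: "t \<noteq> s"
        have "(a2 + (-1) *\<^sub>R a1, b2 + (-1) * b1) \<in> M" using m Madd Msc by blast
        then have "((1/(t-s)) *\<^sub>R (a2 + (-1) *\<^sub>R a1), (1/(t-s)) * (b2 + (-1) * b1)) \<in> M" using Msc by blast
        moreover have "(1/(t-s)) *\<^sub>R (a2 + (-1) *\<^sub>R a1) = y"
        proof -
          have "a2 - a1 = (t - s) *\<^sub>R y" using m by (simp add: algebra_simps)
          then show ?thesis using ts by simp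
        qed
        ultimately show False using ny by auto
      qed
      then have "a1 = a2" using m by simp
      then show "b = b'" using m Mfun \<open>t = s\<close> by auto
    next
      fix a b assume "(a,b) \<in> M'"
      then obtain a1 b1 t where m: "(a1,b1)\<in>M" "a = a1 + t *\<^sub>R y" "b = b1 + t*c" unfolding M'_def by blast
      have hb: "h a1 = b1" using hM m by blast
      show "b \<le> p a"
      proof (cases t "0::real" rule: linorder_cases)
        case less
        define s where "s = -t"
        have s0: "s > 0" using less s_def by simp
        have "((1/s) *\<^sub>R a1, (1/s) * b1) \<in> M" using Msc m by blast
        then have "h ((1/s) *\<^sub>R a1) - p ((1/s) *\<^sub>R a1 - y) \<le> c" using cU by blast
        moreover have "h ((1/s) *\<^sub>R a1) = b1 / s" using hM \<open>((1/s) *\<^sub>R a1, (1/s) * b1) \<in> M\<close> by simp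
        ultimately have "b1/s - c \<le> p ((1/s) *\<^sub>R a1 - y)" by simp
        then have "s * (b1/s - c) \<le> s * p ((1/s) *\<^sub>R a1 - y)" using s0 by (simp add: mult_left_mono)
        also have "s * p ((1/s) *\<^sub>R a1 - y) = p (s *\<^sub>R ((1/s) *\<^sub>R a1 - y))" using hom s0 by simp
        also have "s *\<^sub>R ((1/s) *\<^sub>R a1 - y) = a" using m s_def s0 by (simp add: algebra_simps)
        finally show ?thesis using m s_def s0 by (simp add: algebra_simps)
      next
        case equal then show ?thesis using m Mdom by simp
      next
        case greater
        have "((1/t) *\<^sub>R a1, (1/t) * b1) \<in> M" using Msc m by blast
        then have "c \<le> p ((1/t) *\<^sub>R a1 + y) - h ((1/t) *\<^sub>R a1)" using cL by blast
        moreover have "h ((1/t) *\<^sub>R a1) = b1 / t" using hM \<open>((1/t) *\<^sub>R a1, (1/t) * b1) \<in> M\<close> by simp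
        ultimately have "b1/t + c \<le> p ((1/t) *\<^sub>R a1 + y)" by simp
        then have "t * (b1/t + c) \<le> t * p ((1/t) *\<^sub>R a1 + y)" using greater by (simp add: mult_left_mono)
        also have "t * p ((1/t) *\<^sub>R a1 + y) = p (t *\<^sub>R ((1/t) *\<^sub>R a1 + y))" using hom greater by simp
        also have "t *\<^sub>R ((1/t) *\<^sub>R a1 + y) = a" using m greater by (simp add: algebra_simps)
        finally show ?thesis using m greater by (simp add: algebra_simps)
      qed
    qed
    moreover have MM': "M \<subseteq> M'" unfolding M'_def by force
    ultimately have "M' \<in> A" using H0M A_def by auto
    then have "M' = M" using Mmax MM' by blast
    moreover have "(0,0) \<in> M" using Msc[OF vM, of 0] by simp
    then have "(0 + 1 *\<^sub>R y, 0 + 1 * c) \<in> M'" unfolding M'_def by blast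
    ultimately show False using ny by auto
  qed
  define F where "F x = h x" for x
  have FM: "(x, F x) \<in> M" for x
    using total[of x] hM F_def by auto
  have "linear F"
  proof (rule linearI)
    fix x y show "F (x+y) = F x + F y" using Madd[OF FM FM] hM F_def by metis
  next
    fix r x show "F (r *\<^sub>R x) = r *\<^sub>R F x" using Msc[OF FM] hM F_def by (metis real_scaleR_def)
  qed
  moreover have "\<forall>x. F x \<le> p x" using FM Mdom by blast
  moreover have "F v = p v" using hM vM F_def by simp
  ultimately show ?thesis by blast
qed



lemma open_trans: "open U \<Longrightarrow> open {v::'a::lc_tvs. v + c \<in> U}"
proof (subst open_subopen, intro ballI)
  fix v assume "open U" "v \<in> {v. v + c \<in> U}"
  then obtain V W where "open V" "open W" "v\<in>V" "c\<in>W" "\<forall>a\<in>V. \<forall>b\<in>W. a+b\<in>U"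
    using lc_continuous_add[of U v c] by auto
  then show "\<exists>T. open T \<and> v \<in> T \<and> T \<subseteq> {v. v+c\<in>U}" by blast
qed

lemma open_scale: "open U \<Longrightarrow> open {v::'a::lc_tvs. c *\<^sub>R v \<in> U}"
proof (subst open_subopen, intro ballI)
  fix v assume "open U" "v \<in> {v. c *\<^sub>R v \<in> U}"
  then obtain e V where "e > 0" "open V" "v\<in>V" "\<forall>d. \<bar>d - c\<bar> < e \<longrightarrow> (\<forall>w\<in>V. d *\<^sub>R w \<in> U)"
    using lc_continuous_scaleR[of U c v] by auto
  then show "\<exists>T. open T \<and> v \<in> T \<and> T \<subseteq> {v. c *\<^sub>R v\<in>U}" by force
qed

lemma absorb: "open U \<Longrightarrow> (0::'a::lc_tvs) \<in> U \<Longrightarrow> \<exists>t>0. t *\<^sub>R x \<in> U"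
proof -
  assume "open U" "0 \<in> U"
  then obtain e V where "e > 0" "open V" "x\<in>V" "\<forall>d. \<bar>d - 0\<bar> < e \<longrightarrow> (\<forall>w\<in>V. d *\<^sub>R w \<in> U)"
    using lc_continuous_scaleR[of U 0 x] by auto
  then show ?thesis by (intro exI[where x="e/2"]) auto
qed

lemma lc_convex_nhd:
  assumes "open U" "(0::'a::lc_tvs) \<in> U"
  shows "\<exists>V. open V \<and> 0 \<in> V \<and> V \<subseteq> U \<and> convex V"
proof -
  obtain V where V: "open V" "0 \<in> V" "V \<subseteq> U"
    "\<forall>x\<in>V. \<forall>y\<in>V. \<forall>u::real. 0 \<le> u \<and> u \<le> 1 \<longrightarrow> (1 - u) *\<^sub>R x + u *\<^sub>R y \<in> V"
    using lc_locally_convex[OF assms] by blast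
  have "convex V" unfolding convex_def
  proof (intro ballI allI impI)
    fix x y u v assume "x\<in>V" "y\<in>V" "0 \<le> (u::real)" "0 \<le> v" "u + v = 1"
    then have "u = 1 - v" by simp
    moreover have "(1 - v) *\<^sub>R x + v *\<^sub>R y \<in> V" using V(4) \<open>x\<in>V\<close> \<open>y\<in>V\<close> \<open>0 \<le> u\<close> \<open>0 \<le> v\<close> \<open>u + v = 1\<close> by auto
    ultimately show "u *\<^sub>R x + v *\<^sub>R y \<in> V" by simp
  qed
  then show ?thesis using V by blast
qed

lemma aux_abs:
  fixes d e :: real assumes a: "\<bar>(2/e)*d\<bar> \<le> 1" and e: "e > 0" shows "\<bar>d\<bar> \<le> e/2"
proof -
  have "d = (e/2)*((2/e)*d)" using e by simp
  then have "\<bar>d\<bar> = (e/2)*\<bar>(2/e)*d\<bar>" using e by (metis abs_mult abs_of_pos half_gt_zero)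
  also have "\<dots> \<le> e/2 * 1" using a e by (intro mult_left_mono) auto
  finally show ?thesis by simp
qed

lemma separation:
  fixes G :: "'a::lc_tvs set"
  assumes clo: "closed G" and cvx: "convex G" and ne: "G \<noteq> {}" and pG: "p \<notin> G"
  shows "\<exists>F \<alpha>. F \<in> topdual \<and> (\<forall>g\<in>G. F g \<le> \<alpha>) \<and> \<alpha> < F p"
proof -
  define T where "T = {u. u + p \<in> - G}"
  have "open T" unfolding T_def by (rule open_trans) (use clo in auto)
  moreover have "0 \<in> T" using pG T_def by simp
  ultimately obtain V where V: "open V" "0 \<in> V" "V \<subseteq> T" "convex V"
    using lc_convex_nhd by blast
  define W where "W = V \<inter> {u. (-1) *\<^sub>R u \<in> V}"
  have Wo: "open W" unfolding W_def using V open_scale[of V "-1"] by (intro open_Int) auto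
  have W0: "0 \<in> W" using V W_def by simp
  have Wsym: "\<And>w. w \<in> W \<Longrightarrow> -w \<in> W" using W_def by auto
  have Wc: "convex W" unfolding W_def
  proof (rule convex_Int[OF V(4)])
    have "{u. (-1) *\<^sub>R u \<in> V} = (\<lambda>u. (-1) *\<^sub>R u) ` V" by force
    then show "convex {u. (-1) *\<^sub>R u \<in> V}" using V(4) convex_scaling by metis
  qed
  have WT: "\<And>w. w \<in> W \<Longrightarrow> w + p \<notin> G" using V T_def W_def by auto
  obtain g0 where g0: "g0 \<in> G" using ne by blast
  define D where "D = {g - g0 + w | g w. g \<in> G \<and> w \<in> W}"
  have "D = (\<Union>g\<in>G. {v. v + (g0 - g) \<in> W})"
  proof (intro set_eqI iffI)
    fix x assume "x \<in> D"
    then obtain g w where gw: "x = g - g0 + w" "g\<in>G" "w\<in>W" unfolding D_def by blast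
    then have "x + (g0 - g) = w" by (simp add: algebra_simps)
    then show "x \<in> (\<Union>g\<in>G. {v. v + (g0 - g) \<in> W})" using gw(3) by (intro UN_I[OF gw(2)]) simp
  next
    fix x assume "x \<in> (\<Union>g\<in>G. {v. v + (g0 - g) \<in> W})"
    then obtain g where g: "g\<in>G" "x + (g0 - g) \<in> W" by blast
    have "x = g - g0 + (x + (g0 - g))" by (simp add: algebra_simps)
    then show "x \<in> D" unfolding D_def using g by blast
  qed
  then have Do: "open D" using open_trans Wo by auto
  have D0: "0 \<in> D" unfolding D_def using g0 W0 by force
  have WD: "W \<subseteq> D" unfolding D_def using g0 by force
  have Dc: "convex D" unfolding convex_def
  proof (intro ballI allI impI)
    fix x y u v assume "x\<in>D" "y\<in>D" "0 \<le> (u::real)" and uv0: "0 \<le> v" "u + v = 1"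
    then have uv: "0 \<le> v \<and> u + v = 1" by simp
    from \<open>x\<in>D\<close> \<open>y\<in>D\<close> obtain g w g' w' where x: "x = g - g0 + w" "g\<in>G" "w\<in>W" and y: "y = g' - g0 + w'" "g'\<in>G" "w'\<in>W"
      unfolding D_def by blast
    have "u *\<^sub>R x + v *\<^sub>R y = (u *\<^sub>R g + v *\<^sub>R g') - (u + v) *\<^sub>R g0 + (u *\<^sub>R w + v *\<^sub>R w')"
      unfolding x(1) y(1) by (simp add: algebra_simps)
    then have "u *\<^sub>R x + v *\<^sub>R y = (u *\<^sub>R g + v *\<^sub>R g') - g0 + (u *\<^sub>R w + v *\<^sub>R w')"
      using uv by simp
    moreover have "u *\<^sub>R g + v *\<^sub>R g' \<in> G" using convexD[OF cvx] x y uv \<open>0 \<le> u\<close> by blast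
    moreover have "u *\<^sub>R w + v *\<^sub>R w' \<in> W" using convexD[OF Wc] x y uv \<open>0 \<le> u\<close> by blast
    ultimately show "u *\<^sub>R x + v *\<^sub>R y \<in> D" unfolding D_def by blast
  qed
  define q where "q = p - g0"
  have qD: "q \<notin> D"
  proof
    assume "q \<in> D"
    then obtain g w where "q = g - g0 + w" "g\<in>G" "w\<in>W" unfolding D_def by blast
    then have "(-w) + p = g" using q_def by (simp add: algebra_simps)
    then show False using WT[OF Wsym[OF \<open>w\<in>W\<close>]] \<open>g\<in>G\<close> by simp
  qed
  define S where "S x = {t::real. 0 < t \<and> (1/t) *\<^sub>R x \<in> D}" for x
  define mu where "mu x = Inf (S x)" for x
  have Sne: "S x \<noteq> {}" for x
  proof -
    obtain t where "t > 0" "t *\<^sub>R x \<in> D" using absorb[OF Do D0] by blast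
    then have "1/t \<in> S x" unfolding S_def by simp
    then show ?thesis by blast
  qed
  have Sbdd: "bdd_below (S x)" for x
    unfolding S_def by (rule bdd_belowI[where m=0]) auto
  have mu_nn: "0 \<le> mu x" for x
    unfolding mu_def by (rule cInf_greatest[OF Sne]) (auto simp: S_def)
  have Sadd: "s + t \<in> S (x + y)" if "s \<in> S x" "t \<in> S y" for s t x y
  proof -
    have st: "s > 0" "t > 0" "(1/s) *\<^sub>R x \<in> D" "(1/t) *\<^sub>R y \<in> D" using that S_def by auto
    have "(s/(s+t)) *\<^sub>R ((1/s) *\<^sub>R x) + (t/(s+t)) *\<^sub>R ((1/t) *\<^sub>R y) \<in> D"
    proof (rule convexD[OF Dc st(3,4)])
      show "0 \<le> s/(s+t)" "0 \<le> t/(s+t)" using st by auto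
      show "s/(s+t) + t/(s+t) = 1" using st by (simp add: add_divide_distrib[symmetric])
    qed
    moreover have "(s/(s+t)) *\<^sub>R ((1/s) *\<^sub>R x) + (t/(s+t)) *\<^sub>R ((1/t) *\<^sub>R y) = (1/(s+t)) *\<^sub>R (x + y)"
      using st by (simp add: scaleR_add_right)
    ultimately show ?thesis using st S_def by simp
  qed
  have mu_sub: "mu (x + y) \<le> mu x + mu y" for x y
  proof -
    have h1: "mu (x+y) - t \<le> mu x" if t: "t \<in> S y" for t
    proof -
      have "mu (x+y) - t \<le> s" if "s \<in> S x" for s
        using cInf_lower[OF Sadd[OF that t] Sbdd] mu_def by simp
      then show ?thesis unfolding mu_def[of x] by (intro cInf_greatest[OF Sne]) auto
    qed
    have "mu (x+y) - mu x \<le> t" if "t \<in> S y" for t using h1[OF that] by linarith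
    then have "mu (x+y) - mu x \<le> mu y" unfolding mu_def[of y] by (intro cInf_greatest[OF Sne]) auto
    then show ?thesis by simp
  qed
  have mu_le: "mu (c *\<^sub>R x) \<le> c * mu x" if c: "c > 0" for c x
  proof -
    have "mu (c *\<^sub>R x) / c \<le> t" if t: "t \<in> S x" for t
    proof -
      have "c * t \<in> S (c *\<^sub>R x)" using t c unfolding S_def by auto
      then have "mu (c *\<^sub>R x) \<le> c * t" unfolding mu_def by (rule cInf_lower[OF _ Sbdd])
      then show ?thesis using c by (simp add: divide_le_eq mult.commute)
    qed
    then have "mu (c *\<^sub>R x) / c \<le> mu x" unfolding mu_def[of x] by (intro cInf_greatest[OF Sne]) auto
    then show ?thesis using c by (simp add: divide_le_eq mult.commute)
  qed
  have mu_hom: "mu (c *\<^sub>R x) = c * mu x" if c: "c > 0" for c x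
  proof -
    have "mu x = mu ((1/c) *\<^sub>R (c *\<^sub>R x))" using c by simp
    also have "\<dots> \<le> (1/c) * mu (c *\<^sub>R x)" using mu_le[of "1/c" "c *\<^sub>R x"] c by simp
    finally have "c * mu x \<le> mu (c *\<^sub>R x)" using c by (simp add: field_simps)
    then show ?thesis using mu_le[OF c, of x] by linarith
  qed
  obtain F where Flin: "linear F" and Fle: "\<And>x. F x \<le> mu x" and Fq: "F q = mu q"
    using hahn_banach[of mu q, OF mu_sub mu_hom mu_nn] by blast
  have muq: "1 \<le> mu q"
    unfolding mu_def
  proof (rule cInf_greatest[OF Sne])
    fix t assume "t \<in> S q"
    then have t: "t > 0" "(1/t) *\<^sub>R q \<in> D" using S_def by auto
    show "1 \<le> t"
    proof (rule ccontr)
      assume "\<not> 1 \<le> t"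
      then have "t *\<^sub>R ((1/t) *\<^sub>R q) + (1 - t) *\<^sub>R 0 \<in> D" using t by (intro convexD[OF Dc t(2) D0]) auto
      then show False using qD t by simp
    qed
  qed
  have FD: "F x \<le> 1" if "x \<in> D" for x
  proof -
    have "1 \<in> S x" using that S_def by simp
    then have "mu x \<le> 1" unfolding mu_def by (rule cInf_lower[OF _ Sbdd])
    then show ?thesis using Fle[of x] by simp
  qed
  have FW: "\<bar>F w\<bar> \<le> 1" if "w \<in> W" for w
  proof -
    have "F w \<le> 1" using FD WD that by blast
    moreover have "F (-w) \<le> 1" using FD WD Wsym that by blast
    moreover have "F (-w) = - F w" using linear_neg[OF Flin] by simp
    ultimately show ?thesis by simp
  qed
  have Fcont: "continuous_on UNIV F"
    unfolding continuous_on_topological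
  proof (intro ballI allI impI)
    fix x B assume "open B" "F x \<in> B"
    then obtain e where e: "e > 0" "\<forall>y. dist y (F x) < e \<longrightarrow> y \<in> B" using open_dist by metis
    define A where "A = {v. v + (-x) \<in> {u. (2/e) *\<^sub>R u \<in> W}}"
    have "open A" unfolding A_def by (rule open_trans[OF open_scale[OF Wo]])
    moreover have "x \<in> A" using A_def W0 by simp
    moreover have "F y \<in> B" if "y \<in> A" for y
    proof -
      have "\<bar>F ((2/e) *\<^sub>R (y + (-x)))\<bar> \<le> 1" using FW that A_def by blast
      moreover have "F ((2/e) *\<^sub>R (y + (-x))) = (2/e) * (F y - F x)"
      proof -
        have "F ((2/e) *\<^sub>R (y + (-x))) = (2/e) * F (y - x)" using linear_scale[OF Flin] by simp
        also have "F (y - x) = F y - F x" using linear_diff[OF Flin] by simp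
        finally show ?thesis .
      qed
      ultimately have "\<bar>(2/e) * (F y - F x)\<bar> \<le> 1" by simp
      then have "\<bar>F y - F x\<bar> \<le> e/2" using aux_abs e by blast
      then have "dist (F y) (F x) < e" using e by (simp add: dist_real_def)
      then show ?thesis using e by blast
    qed
    ultimately show "\<exists>A. open A \<and> x \<in> A \<and> (\<forall>y\<in>UNIV. y \<in> A \<longrightarrow> F y \<in> B)" by blast
  qed
  obtain t where t: "t > 0" "t *\<^sub>R q \<in> W" using absorb[OF Wo W0] by blast
  define \<delta> where "\<delta> = F (t *\<^sub>R q)"
  have "\<delta> = t * mu q" using linear_scale[OF Flin] Fq \<delta>_def by simp
  moreover have "t * 1 \<le> t * mu q" using t muq by (intro mult_left_mono) auto
  ultimately have d0: "\<delta> > 0" using t by linarith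
  have "F g \<le> F p - \<delta>" if "g \<in> G" for g
  proof -
    have "g - g0 + t *\<^sub>R q \<in> D" unfolding D_def using that t by blast
    then have "F (g - g0 + t *\<^sub>R q) \<le> 1" by (rule FD)
    then have "F g - F g0 + \<delta> \<le> F q" using Flin muq Fq \<delta>_def by (simp add: linear_add linear_diff)
    then show ?thesis using Flin q_def by (simp add: linear_diff)
  qed
  moreover have "F \<in> topdual" unfolding topdual_def using Flin Fcont by simp
  ultimately show ?thesis using d0 by (intro exI[where x=F] exI[where x="F p - \<delta>"]) auto
qed



instance prod :: (lc_tvs, lc_tvs) lc_tvs
proof
  fix U :: "('a \<times> 'b) set" and a b
  assume U: "open U" "a + b \<in> U"
  obtain A B where AB: "open A" "open B" "a + b \<in> A \<times> B" "A \<times> B \<subseteq> U"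
    using open_prod_elim[OF U] by blast
  have ab: "fst a + fst b \<in> A" "snd a + snd b \<in> B" using AB(3) by (auto simp: mem_Times_iff)
  obtain V1 W1 where 1: "open V1" "open W1" "fst a \<in> V1" "fst b \<in> W1" "\<forall>v\<in>V1. \<forall>w\<in>W1. v + w \<in> A"
    using lc_continuous_add[OF AB(1) ab(1)] by blast
  obtain V2 W2 where 2: "open V2" "open W2" "snd a \<in> V2" "snd b \<in> W2" "\<forall>v\<in>V2. \<forall>w\<in>W2. v + w \<in> B"
    using lc_continuous_add[OF AB(2) ab(2)] by blast
  show "\<exists>V W. open V \<and> open W \<and> a \<in> V \<and> b \<in> W \<and> (\<forall>v\<in>V. \<forall>w\<in>W. v + w \<in> U)"
  proof (intro exI conjI)
    show "open (V1 \<times> V2)" "open (W1 \<times> W2)" using 1 2 by (auto intro: open_Times)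
    show "a \<in> V1 \<times> V2" "b \<in> W1 \<times> W2" using 1 2 by (auto simp: mem_Times_iff)
    show "\<forall>v\<in>V1 \<times> V2. \<forall>w\<in>W1 \<times> W2. v + w \<in> U"
      using 1(5) 2(5) AB(4) by (auto simp: mem_Times_iff)
  qed
next
  fix U :: "('a \<times> 'b) set" and c a
  assume U: "open U" "c *\<^sub>R a \<in> U"
  obtain A B where AB: "open A" "open B" "c *\<^sub>R a \<in> A \<times> B" "A \<times> B \<subseteq> U"
    using open_prod_elim[OF U] by blast
  have ab: "c *\<^sub>R fst a \<in> A" "c *\<^sub>R snd a \<in> B" using AB(3) by (auto simp: mem_Times_iff)
  obtain e1 V1 where 1: "e1 > 0" "open V1" "fst a \<in> V1" "\<forall>d. \<bar>d - c\<bar> < e1 \<longrightarrow> (\<forall>v\<in>V1. d *\<^sub>R v \<in> A)"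
    using lc_continuous_scaleR[OF AB(1) ab(1)] by blast
  obtain e2 V2 where 2: "e2 > 0" "open V2" "snd a \<in> V2" "\<forall>d. \<bar>d - c\<bar> < e2 \<longrightarrow> (\<forall>v\<in>V2. d *\<^sub>R v \<in> B)"
    using lc_continuous_scaleR[OF AB(2) ab(2)] by blast
  show "\<exists>e>0. \<exists>V. open V \<and> a \<in> V \<and> (\<forall>d. \<bar>d - c\<bar> < e \<longrightarrow> (\<forall>v\<in>V. d *\<^sub>R v \<in> U))"
  proof (intro exI conjI allI impI ballI)
    show "min e1 e2 > 0" using 1 2 by simp
    show "open (V1 \<times> V2)" using 1 2 by (auto intro: open_Times)
    show "a \<in> V1 \<times> V2" using 1 2 by (auto simp: mem_Times_iff)
    fix d v assume "\<bar>d - c\<bar> < min e1 e2" "v \<in> V1 \<times> V2"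
    then show "d *\<^sub>R v \<in> U" using 1(4) 2(4) AB(4) by (auto simp: mem_Times_iff)
  qed
next
  fix U :: "('a \<times> 'b) set"
  assume U: "open U" "0 \<in> U"
  obtain A B where AB: "open A" "open B" "0 \<in> A \<times> B" "A \<times> B \<subseteq> U"
    using open_prod_elim[OF U] by blast
  have ab: "0 \<in> A" "0 \<in> B" using AB(3) by (auto simp: zero_prod_def)
  obtain V1 where 1: "open V1" "0 \<in> V1" "V1 \<subseteq> A" "\<forall>x\<in>V1. \<forall>y\<in>V1. \<forall>u::real. 0 \<le> u \<and> u \<le> 1 \<longrightarrow> (1 - u) *\<^sub>R x + u *\<^sub>R y \<in> V1"
    using lc_locally_convex[OF AB(1) ab(1)] by blast
  obtain V2 where 2: "open V2" "0 \<in> V2" "V2 \<subseteq> B" "\<forall>x\<in>V2. \<forall>y\<in>V2. \<forall>u::real. 0 \<le> u \<and> u \<le> 1 \<longrightarrow> (1 - u) *\<^sub>R x + u *\<^sub>R y \<in> V2"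
    using lc_locally_convex[OF AB(2) ab(2)] by blast
  show "\<exists>V. open V \<and> 0 \<in> V \<and> V \<subseteq> U \<and>
       (\<forall>x\<in>V. \<forall>y\<in>V. \<forall>u::real. 0 \<le> u \<and> u \<le> 1 \<longrightarrow> (1 - u) *\<^sub>R x + u *\<^sub>R y \<in> V)"
  proof (intro exI conjI)
    show "open (V1 \<times> V2)" using 1 2 by (auto intro: open_Times)
    show "0 \<in> V1 \<times> V2" using 1 2 by (auto simp: zero_prod_def)
    show "V1 \<times> V2 \<subseteq> U" using 1 2 AB by auto
    show "\<forall>x\<in>V1 \<times> V2. \<forall>y\<in>V1 \<times> V2. \<forall>u::real. 0 \<le> u \<and> u \<le> 1 \<longrightarrow> (1 - u) *\<^sub>R x + u *\<^sub>R y \<in> V1 \<times> V2"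
      using 1(4) 2(4) by (auto simp: mem_Times_iff)
  qed
qed

lemma Qtri_add: "A \<in> Qtri C \<Longrightarrow> a \<in> A \<Longrightarrow> c \<in> C \<Longrightarrow> a + c \<in> A"
proof -
  assume "A \<in> Qtri C" "a \<in> A" "c \<in> C"
  then have eq: "A = closure (convex hull {a + c | a c. a \<in> A \<and> c \<in> C})" unfolding Qtri_def by blast
  have "a + c \<in> {a + c | a c. a \<in> A \<and> c \<in> C}" using \<open>a \<in> A\<close> \<open>c \<in> C\<close> by blast
  then have "a + c \<in> convex hull {a + c | a c. a \<in> A \<and> c \<in> C}" by (rule hull_inc)
  then have "a + c \<in> closure (convex hull {a + c | a c. a \<in> A \<and> c \<in> C})"
    using closure_subset by (rule subsetD[rotated])
  then show ?thesis using eq by simp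
qed

lemma zero_topdual: "(\<lambda>x. 0) \<in> topdual"
  unfolding topdual_def by (auto intro!: linearI)

theorem mainTheorem20:
  fixes C :: "'z::lc_tvs set" and g :: "'x::lc_tvs \<Rightarrow> 'z set"
  assumes "convex C" and "cone C" and "0 \<in> C"
    and "negdual C \<noteq> {\<lambda>z. 0}"
    and "\<forall>x. g x \<in> Qtri C"
    and "convex (graph g)" and "closed (graph g)"
  shows "biconj C g = g"
proof (rule ext, rule set_eqI, rule iffI)
  fix x0 z0
  assume zb: "z0 \<in> biconj C g x0"
  have use: "b + z0 \<in> Scon xi r zs x0"
    if "xi \<in> Xtri" "zs \<in> negdual C" "b \<in> conj g xi r zs" for xi r zs b
  proof -
    have "minus_tri (Scon xi r zs x0) (conj g xi r zs) \<in> {minus_tri (Scon xi r zs x0) (conj g xi r zs) | xi r zs.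
                        xi \<in> Xtri \<and> zs \<in> negdual C}" using that by blast
    then have "z0 \<in> minus_tri (Scon xi r zs x0) (conj g xi r zs)" using zb unfolding biconj_def by (rule InterD[rotated])
    then show ?thesis using that(3) unfolding minus_tri_def by simp
  qed
  show "z0 \<in> g x0"
  proof (rule ccontr)
    assume nz: "z0 \<notin> g x0"
    show False
    proof (cases "graph g = {}")
      case True
      then have ge: "g x = {}" for x unfolding graph_def by auto
      have "Hat (\<lambda>x. 0) \<in> Xtri" unfolding Xtri_def using zero_topdual by blast
      moreover have "(\<lambda>z. 0) \<in> negdual C" unfolding negdual_def using zero_topdual by simp
      moreover have "0 \<in> conj g (Hat (\<lambda>x. 0)) (-1) (\<lambda>z. 0)"
        unfolding conj_def minus_tri_def using ge by simp
      ultimately have "0 + z0 \<in> Scon (Hat (\<lambda>x. 0)) (-1) (\<lambda>z. 0) x0" by (rule use)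
      then show False unfolding Scon_def by simp
    next
      case False
      have "(x0, z0) \<notin> graph g" using nz unfolding graph_def by simp
      then obtain F \<alpha> where F: "F \<in> topdual" and Fle: "\<forall>q\<in>graph g. F q \<le> \<alpha>" and Fp: "\<alpha> < F (x0, z0)"
        using separation[OF assms(7) assms(6) False] by blast
      have Flin: "linear F" and Fcont: "continuous_on UNIV F" using F topdual_def by auto
      define xs where "xs x = F (x, 0)" for x
      define zs where "zs z = F (0, z)" for z
      have Fsplit: "F (x, z) = xs x + zs z" for x z
      proof -
        have "(x, z) = (x, 0) + (0, z)" by simp
        then show ?thesis unfolding xs_def zs_def using linear_add[OF Flin] by metis
      qed
      have "linear xs" unfolding xs_def
      proof (rule linearI)
        fix a b :: 'x show "F (a + b, 0) = F (a, 0) + F (b, 0)"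
          using linear_add[OF Flin, of "(a,0)" "(b,0)"] by simp
      next
        fix r and a :: 'x show "F (r *\<^sub>R a, 0) = r *\<^sub>R F (a, 0)"
          using linear_scale[OF Flin, of r "(a,0)"] by simp
      qed
      moreover have "continuous_on UNIV xs" unfolding xs_def
        by (rule continuous_on_compose2[OF Fcont]) (auto intro!: continuous_intros)
      ultimately have xsd: "xs \<in> topdual" unfolding topdual_def by simp
      have "linear zs" unfolding zs_def
      proof (rule linearI)
        fix a b :: 'z show "F (0, a + b) = F (0, a) + F (0, b)"
          using linear_add[OF Flin, of "(0,a)" "(0,b)"] by simp
      next
        fix r and a :: 'z show "F (0, r *\<^sub>R a) = r *\<^sub>R F (0, a)"
          using linear_scale[OF Flin, of r "(0,a)"] by simp
      qed
      moreover have "continuous_on UNIV zs" unfolding zs_def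
        by (rule continuous_on_compose2[OF Fcont]) (auto intro!: continuous_intros)
      ultimately have zsd: "zs \<in> topdual" unfolding topdual_def by simp
      obtain x1 y1 where xy1: "(x1, y1) \<in> graph g" using False by auto
      have "zs c \<le> 0" if cC: "c \<in> C" for c
      proof (rule ccontr)
        assume "\<not> zs c \<le> 0"
        then have zc: "zs c > 0" by simp
        define t where "t = (\<alpha> - F (x1, y1)) / zs c + 1"
        have a1: "F (x1, y1) \<le> \<alpha>" using Fle xy1 by blast
        have t0: "t \<ge> 0" using a1 zc t_def by simp
        have "t *\<^sub>R c \<in> C" using assms(2) cC t0 unfolding cone_def by blast
        moreover have "y1 \<in> g x1" using xy1 unfolding graph_def by simp
        ultimately have "y1 + t *\<^sub>R c \<in> g x1" using Qtri_add[OF assms(5)[rule_format]] by blast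
        then have "F (x1, y1 + t *\<^sub>R c) \<le> \<alpha>" using Fle unfolding graph_def by blast
        moreover have "zs (y1 + t *\<^sub>R c) = zs y1 + t * zs c"
          using linear_add[OF \<open>linear zs\<close>] linear_scale[OF \<open>linear zs\<close>] by simp
        moreover have "t * zs c = \<alpha> - F (x1, y1) + zs c" using zc t_def by (simp add: field_simps)
        ultimately show False using Fsplit[of x1 y1] Fsplit[of x1 "y1 + t *\<^sub>R c"] zc by linarith
      qed
      then have zsn: "zs \<in> negdual C" unfolding negdual_def using zsd by simp
      have xit: "Lin xs \<in> Xtri" unfolding Xtri_def using xsd by blast
      have "0 \<in> conj g (Lin xs) \<alpha> zs"
        unfolding conj_def minus_tri_def Scon_def
      proof (intro InterI, clarify)
        fix x b assume "b \<in> g x"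
        then have "F (x, b) \<le> \<alpha>" using Fle unfolding graph_def by blast
        then show "xi_r (Lin xs) \<alpha> x \<le> ereal (- zs (b + 0))" using Fsplit by simp
      qed
      then have "0 + z0 \<in> Scon (Lin xs) \<alpha> zs x0" using use[OF xit zsn] by blast
      then have "xs x0 + zs z0 \<le> \<alpha>" unfolding Scon_def by simp
      then show False using Fp Fsplit by simp
    qed
  qed
next
  fix x z assume zg: "z \<in> g x"
  show "z \<in> biconj C g x"
    unfolding biconj_def
  proof (rule InterI)
    fix M assume "M \<in> {minus_tri (Scon xi r zs x) (conj g xi r zs) | xi r zs. xi \<in> Xtri \<and> zs \<in> negdual C}"
    then obtain xi r zs where M: "M = minus_tri (Scon xi r zs x) (conj g xi r zs)" by blast
    show "z \<in> M" unfolding M minus_tri_def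
    proof (intro CollectI ballI)
      fix b assume "b \<in> conj g xi r zs"
      then have "b \<in> minus_tri (Scon xi r zs x) (g x)" unfolding conj_def by blast
      then have "z + b \<in> Scon xi r zs x" using zg unfolding minus_tri_def by blast
      then show "b + z \<in> Scon xi r zs x" by (simp add: add.commute)
    qed
  qed
qed

end
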